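(* Let $u$ and $v$ be vertices of $G$ and let $\delta_T(u,v)$ denote the length of the path from $u$ to $v$ in $T$. The routing algorithm, when routing from $u$ to $v$, terminates after a finite number of steps, and the total weight (in $G$) of the path it traverses is exactly $\delta_T(u,v)$; in particular the routing ratio with respect to the tree metric induced by $T$ is $1$.
   Context: Let $T$ be a rooted tree on $n$ vertices with positive edge weights; $P(a,b)$ is the path in $T$ from $a$ to $b$ and $\delta_T(a,b)$ its weight. Ancestor/descendant refer to $T$, and a vertex counts as its own ancestor and descendant; "deepest"/"highest" refer to depth in $T$. $T_v$ is the subtree of $T$ rooted at $v$. For every non-leaf vertex $v$ fix a child $c_1(v)$ with $|T_{c_1(v)}|$ maximal; edges $(v,c_1(v))$ are leftmost. A subtree $R$ of $T$ is rooted at its vertex closest to the root, $rt(R)$, and inherits the leftmost labelling; $R_v$ is the subtree of $R$ rooted at $v$. $P_R(v)$ is the longest downward path from $v$ in $R$ using only leftmost edges, with last vertex $l(v)$; $l(R):=l(rt(R))$. A vertex $v$ of $R$ is $d$-balanced if $|R_{c_1(v)}|\le |R|-d$ (with $|R_{c_1(v)}|=0$ if $c_1(v)$ is undefined or not in $R$); $b_d(v)$ is the first $d$-balanced vertex on $P_R(v)$, or NULL. $CV(R,d)=\emptyset$ if $b_d(rt(R))$ is NULL, else $\{b\}\cup\bigcup_w CV(R_w,d)$ with $b=b_d(rt(R))$ and $w$ ranging over children of $b$ in $R$. Fix an integer $k\ge4$; for a subtree $R$ with $m$ vertices, $C_R=V(R)$ if $k\ge m/2-1$, else $C_R=CV(R,m/k)\cup\{l(R),rt(R)\}$.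 Canonical subtrees: $T$ is canonical; if $R$ is canonical, each component of $R$ minus $C_R$ is canonical. Each vertex $v$ lies in $C_R$ for exactly one canonical $R$, denoted $T^v$. The spanner $G$ has vertex set $V(T)$ and edges: all edges of $T$, and all pairs of distinct vertices of $C_R$ for every canonical $R$; edge $(a,b)$ has weight $\delta_T(a,b)$. Routing algorithm from current vertex $u$ to destination $v$, repeated until $v$ is reached: Case 0: if $v$ is adjacent to $u$, move to $v$. Case 1: $u$ is an ancestor of $v$; let $X$ be the vertices of $C_{T^u}$ that are ancestors of $v$, $x$ the deepest; move to $x$, then to the child of $x$ that is an ancestor of $v$. Case 2: $u$ is a descendant of $v$; let $X$ be the vertices of $C_{T^u}$ that are descendants of $v$ and ancestors of $u$, $x$ the highest; move to $x$, then to the parent of $x$. Case 3: $u$ is neither; let $X$ be the vertices of $C_{T^u}$ that are ancestors of $v$ but not of $u$, and $Y$ those that are ancestors of $u$ but not of $v$, $y$ the highest vertex of $Y$. Case 3 a): $X=\emptyset$: move to $y$, then to the parent of $y$. Case 3 b): $X\neq\emptyset$: with $x$ the deepest vertex of $X$ and $x'$ the child of $x$ that is an ancestor of $v$, move to $x$, then to $x'$. (Moving to the current vertex means staying.) *)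

theory Defs
  imports Complex_Main
begin

text \<open>The edges of T are the pairs (x, par x) for x in V - {r}; the weight of that
edge is w x.\<close>

definition anc :: "('a \<Rightarrow> 'a) \<Rightarrow> 'a \<Rightarrow> 'a \<Rightarrow> bool" where
  "anc par a b \<longleftrightarrow> (\<exists>k. (par ^^ k) b = a)"

definition rooted_tree :: "'a set \<Rightarrow> 'a \<Rightarrow> ('a \<Rightarrow> 'a) \<Rightarrow> bool" where
  "rooted_tree V r par \<longleftrightarrow> finite V \<and> r \<in> V \<and> par r = r \<and>
     (\<forall>v\<in>V. par v \<in> V \<and> anc par r v)"

definition depth :: "'a \<Rightarrow> ('a \<Rightarrow> 'a) \<Rightarrow> 'a \<Rightarrow> nat" where
  "depth r par v = (LEAST k. (par ^^ k) v = r)"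

definition isChild :: "'a set \<Rightarrow> 'a \<Rightarrow> ('a \<Rightarrow> 'a) \<Rightarrow> 'a \<Rightarrow> 'a \<Rightarrow> bool" where
  "isChild V r par c x \<longleftrightarrow> c \<in> V \<and> c \<noteq> r \<and> par c = x"

text \<open>Weight of the tree path P(a,b): the edges (x, par x) of P(a,b) are exactly
those whose lower endpoint x is an ancestor of exactly one of a, b.\<close>
definition delta :: "('a \<Rightarrow> 'a) \<Rightarrow> ('a \<Rightarrow> real) \<Rightarrow> 'a \<Rightarrow> 'a \<Rightarrow> real" where
  "delta par w a b =
     (\<Sum>x \<in> ({x. anc par x a} - {x. anc par x b}) \<union> ({x. anc par x b} - {x. anc par x a}). w x)"

definition tadj :: "'a set \<Rightarrow> 'a \<Rightarrow> ('a \<Rightarrow> 'a) \<Rightarrow> 'a \<Rightarrow> 'a \<Rightarrow> bool" where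
  "tadj V r par x y \<longleftrightarrow> x \<in> V \<and> y \<in> V \<and>
     ((x \<noteq> r \<and> par x = y) \<or> (y \<noteq> r \<and> par y = x))"

definition conn_in :: "'a set \<Rightarrow> 'a \<Rightarrow> ('a \<Rightarrow> 'a) \<Rightarrow> 'a set \<Rightarrow> 'a \<Rightarrow> 'a \<Rightarrow> bool" where
  "conn_in V r par A x y \<longleftrightarrow>
     x \<in> A \<and> y \<in> A \<and> (\<lambda>a b. a \<in> A \<and> b \<in> A \<and> tadj V r par a b)\<^sup>*\<^sup>* x y"

definition components :: "'a set \<Rightarrow> 'a \<Rightarrow> ('a \<Rightarrow> 'a) \<Rightarrow> 'a set \<Rightarrow> 'a set set" where
  "components V r par A = {{y. conn_in V r par A x y} | x. x \<in> A}"

definition rt :: "'a \<Rightarrow> ('a \<Rightarrow> 'a) \<Rightarrow> 'a set \<Rightarrow> 'a" where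
  "rt r par S = (THE x. x \<in> S \<and> (\<forall>y\<in>S. y \<noteq> x \<longrightarrow> depth r par x < depth r par y))"

definition sub :: "('a \<Rightarrow> 'a) \<Rightarrow> 'a set \<Rightarrow> 'a \<Rightarrow> 'a set" where
  "sub par S v = {x \<in> S. anc par v x}"

text \<open>c1 is the fixed heavy-child choice; (v, c1 v) is a leftmost edge when
c1 v is a child of v. One step along a leftmost edge inside R (stays at the end).\<close>
definition lstep :: "'a set \<Rightarrow> 'a \<Rightarrow> ('a \<Rightarrow> 'a) \<Rightarrow> ('a \<Rightarrow> 'a) \<Rightarrow> 'a set \<Rightarrow> 'a \<Rightarrow> 'a" where
  "lstep V r par c1 S x = (if isChild V r par (c1 x) x \<and> c1 x \<in> S then c1 x else x)"

definition lend :: "'a set \<Rightarrow> 'a \<Rightarrow> ('a \<Rightarrow> 'a) \<Rightarrow> ('a \<Rightarrow> 'a) \<Rightarrow> 'a set \<Rightarrow> 'a \<Rightarrow> 'a" where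
  "lend V r par c1 S v = (THE y. (\<exists>j. (lstep V r par c1 S ^^ j) v = y) \<and> lstep V r par c1 S y = y)"

definition hsize :: "'a set \<Rightarrow> 'a \<Rightarrow> ('a \<Rightarrow> 'a) \<Rightarrow> ('a \<Rightarrow> 'a) \<Rightarrow> 'a set \<Rightarrow> 'a \<Rightarrow> nat" where
  "hsize V r par c1 S v =
     (if isChild V r par (c1 v) v \<and> c1 v \<in> S then card (sub par S (c1 v)) else 0)"

definition balanced :: "'a set \<Rightarrow> 'a \<Rightarrow> ('a \<Rightarrow> 'a) \<Rightarrow> ('a \<Rightarrow> 'a) \<Rightarrow> 'a set \<Rightarrow> real \<Rightarrow> 'a \<Rightarrow> bool" where
  "balanced V r par c1 S d v \<longleftrightarrow> real (hsize V r par c1 S v) \<le> real (card S) - d"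

definition bd :: "'a set \<Rightarrow> 'a \<Rightarrow> ('a \<Rightarrow> 'a) \<Rightarrow> ('a \<Rightarrow> 'a) \<Rightarrow> 'a set \<Rightarrow> real \<Rightarrow> 'a \<Rightarrow> 'a option" where
  "bd V r par c1 S d v =
     (if \<exists>j. balanced V r par c1 S d ((lstep V r par c1 S ^^ j) v)
      then Some ((lstep V r par c1 S ^^ (LEAST j. balanced V r par c1 S d ((lstep V r par c1 S ^^ j) v))) v)
      else None)"

inductive CV :: "'a set \<Rightarrow> 'a \<Rightarrow> ('a \<Rightarrow> 'a) \<Rightarrow> ('a \<Rightarrow> 'a) \<Rightarrow> real \<Rightarrow> 'a set \<Rightarrow> 'a \<Rightarrow> bool"
  for V r par c1 d where
  CV_here: "bd V r par c1 S d (rt r par S) = Some b \<Longrightarrow> CV V r par c1 d S b"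
| CV_rec: "bd V r par c1 S d (rt r par S) = Some b \<Longrightarrow> isChild V r par w b \<Longrightarrow> w \<in> S \<Longrightarrow>
     CV V r par c1 d (sub par S w) x \<Longrightarrow> CV V r par c1 d S x"

definition Cset :: "'a set \<Rightarrow> 'a \<Rightarrow> ('a \<Rightarrow> 'a) \<Rightarrow> ('a \<Rightarrow> 'a) \<Rightarrow> nat \<Rightarrow> 'a set \<Rightarrow> 'a set" where
  "Cset V r par c1 k S =
     (if real k \<ge> real (card S) / 2 - 1 then S
      else {x. CV V r par c1 (real (card S) / real k) S x}
           \<union> {lend V r par c1 S (rt r par S), rt r par S})"

inductive canonical :: "'a set \<Rightarrow> 'a \<Rightarrow> ('a \<Rightarrow> 'a) \<Rightarrow> ('a \<Rightarrow> 'a) \<Rightarrow> nat \<Rightarrow> 'a set \<Rightarrow> bool"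
  for V r par c1 k where
  canon_T: "canonical V r par c1 k V"
| canon_comp: "canonical V r par c1 k S \<Longrightarrow>
     X \<in> components V r par (S - Cset V r par c1 k S) \<Longrightarrow> canonical V r par c1 k X"

definition Tsup :: "'a set \<Rightarrow> 'a \<Rightarrow> ('a \<Rightarrow> 'a) \<Rightarrow> ('a \<Rightarrow> 'a) \<Rightarrow> nat \<Rightarrow> 'a \<Rightarrow> 'a set" where
  "Tsup V r par c1 k v = (THE S. canonical V r par c1 k S \<and> v \<in> Cset V r par c1 k S)"

definition adjG :: "'a set \<Rightarrow> 'a \<Rightarrow> ('a \<Rightarrow> 'a) \<Rightarrow> ('a \<Rightarrow> 'a) \<Rightarrow> nat \<Rightarrow> 'a \<Rightarrow> 'a \<Rightarrow> bool" where
  "adjG V r par c1 k a b \<longleftrightarrow> a \<in> V \<and> b \<in> V \<and> a \<noteq> b \<and>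
     (tadj V r par a b \<or>
      (\<exists>S. canonical V r par c1 k S \<and> a \<in> Cset V r par c1 k S \<and> b \<in> Cset V r par c1 k S))"

definition deepest :: "'a \<Rightarrow> ('a \<Rightarrow> 'a) \<Rightarrow> 'a set \<Rightarrow> 'a" where
  "deepest r par X = (THE x. x \<in> X \<and> (\<forall>y\<in>X. depth r par y \<le> depth r par x))"

definition highest :: "'a \<Rightarrow> ('a \<Rightarrow> 'a) \<Rightarrow> 'a set \<Rightarrow> 'a" where
  "highest r par X = (THE x. x \<in> X \<and> (\<forall>y\<in>X. depth r par x \<le> depth r par y))"

definition childToward :: "'a set \<Rightarrow> 'a \<Rightarrow> ('a \<Rightarrow> 'a) \<Rightarrow> 'a \<Rightarrow> 'a \<Rightarrow> 'a" where
  "childToward V r par x v = (THE c. isChild V r par c x \<and> anc par c v)"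

text \<open>One iteration of the routing algorithm at current vertex u (u \<noteq> v):
the list of vertices moved to, in order; its last element is the new current vertex.\<close>
definition rstep :: "'a set \<Rightarrow> 'a \<Rightarrow> ('a \<Rightarrow> 'a) \<Rightarrow> ('a \<Rightarrow> 'a) \<Rightarrow> nat \<Rightarrow> 'a \<Rightarrow> 'a \<Rightarrow> 'a list" where
  "rstep V r par c1 k u v =
    (let C = Cset V r par c1 k (Tsup V r par c1 k u) in
     if adjG V r par c1 k u v then [v]
     else if anc par u v then
       (let x = deepest r par {x \<in> C. anc par x v} in [x, childToward V r par x v])
     else if anc par v u then
       (let x = highest r par {x \<in> C. anc par v x \<and> anc par x u} in [x, par x])
     else
       (let X = {x \<in> C. anc par x v \<and> \<not> anc par x u};
            Y = {y \<in> C. anc par y u \<and> \<not> anc par y v} in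
        if X = {} then (let y = highest r par Y in [y, par y])
        else (let x = deepest r par X in [x, childToward V r par x v])))"

fun walk :: "'a set \<Rightarrow> 'a \<Rightarrow> ('a \<Rightarrow> 'a) \<Rightarrow> ('a \<Rightarrow> 'a) \<Rightarrow> nat \<Rightarrow> nat \<Rightarrow> 'a \<Rightarrow> 'a \<Rightarrow> 'a list" where
  "walk V r par c1 k 0 u v = [u]"
| "walk V r par c1 k (Suc n) u v =
     (if u = v then [u]
      else u # butlast (rstep V r par c1 k u v) @ walk V r par c1 k n (last (rstep V r par c1 k u v)) v)"

text \<open>weight in G of a walk (edge (a,b) of G has weight delta a b; staying costs 0)\<close>
definition walk_weight :: "('a \<Rightarrow> 'a) \<Rightarrow> ('a \<Rightarrow> real) \<Rightarrow> 'a list \<Rightarrow> real" where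
  "walk_weight par w xs = sum_list (map (\<lambda>(a, b). delta par w a b) (zip xs (tl xs)))"

end

theory Submission imports Defs begin

definition dset :: "('a \<Rightarrow> 'a) \<Rightarrow> 'a \<Rightarrow> 'a \<Rightarrow> 'a set" where
  "dset par a b = ({x. anc par x a} - {x. anc par x b}) \<union> ({x. anc par x b} - {x. anc par x a})"

definition betw :: "('a \<Rightarrow> 'a) \<Rightarrow> 'a \<Rightarrow> 'a \<Rightarrow> 'a \<Rightarrow> bool" where
  "betw par a m b \<longleftrightarrow> {x. anc par x a} \<inter> {x. anc par x b} \<subseteq> {x. anc par x m}
     \<and> {x. anc par x m} \<subseteq> {x. anc par x a} \<union> {x. anc par x b}"

lemma delta_dset: "delta par w a b = sum w (dset par a b)"
  unfolding delta_def dset_def by simp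

lemma ex_max_nat: assumes "finite X" "X \<noteq> {}" shows "\<exists>x\<in>X. \<forall>y\<in>X. (f y :: nat) \<le> f x"
proof -
  have "Max (f ` X) \<in> f ` X" using assms by simp
  then obtain x where "Max (f ` X) = f x" "x \<in> X" by (erule imageE)
  moreover have "\<forall>y\<in>X. f y \<le> Max (f ` X)" using assms by simp
  ultimately show ?thesis by metis
qed

lemma ex_min_nat: assumes "finite X" "X \<noteq> {}" shows "\<exists>x\<in>X. \<forall>y\<in>X. (f x :: nat) \<le> f y"
proof -
  have "Min (f ` X) \<in> f ` X" using assms by simp
  then obtain x where "Min (f ` X) = f x" "x \<in> X" by (erule imageE)
  moreover have "\<forall>y\<in>X. Min (f ` X) \<le> f y" using assms by simp
  ultimately show ?thesis by metis
qed

definition okw :: "('a \<Rightarrow> 'a \<Rightarrow> bool) \<Rightarrow> 'a list \<Rightarrow> bool" where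
  "okw G xs \<longleftrightarrow> (\<forall>i. Suc i < length xs \<longrightarrow> xs ! i = xs ! Suc i \<or> G (xs ! i) (xs ! Suc i))"

lemma okw_single: "okw G [a]"
  unfolding okw_def by simp

lemma okw_cons: assumes "okw G (b # ys)" "a = b \<or> G a b" shows "okw G (a # b # ys)"
  unfolding okw_def
proof (intro allI impI)
  fix i assume i: "Suc i < length (a # b # ys)"
  show "(a # b # ys) ! i = (a # b # ys) ! Suc i \<or> G ((a # b # ys) ! i) ((a # b # ys) ! Suc i)"
  proof (cases i)
    case 0 then show ?thesis using assms(2) by simp
  next
    case (Suc j)
    then have "Suc j < length (b # ys)" using i by simp
    then show ?thesis using assms(1) Suc unfolding okw_def by simp
  qed
qed

lemma ww_single: "walk_weight par w [a] = 0"
  unfolding walk_weight_def by simp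

lemma ww_cons: "walk_weight par w (a # b # ys) = delta par w a b + walk_weight par w (b # ys)"
  unfolding walk_weight_def by simp

lemma walk_hd: "\<exists>ys. walk V r par c1 k n u v = u # ys"
  by (cases n) auto

lemma delta_self: "delta par w a a = 0"
  unfolding delta_def by simp

lemma pow_split: assumes "m \<le> n" shows "(f ^^ n) x = (f ^^ (n - m)) ((f ^^ m) x)"
proof -
  have "f ^^ n = (f ^^ (n - m)) \<circ> (f ^^ m)" using funpow_add[of "n-m" m f] assms by simp
  then show ?thesis by simp
qed

locale rtree =
  fixes V :: "'a set" and r :: 'a and par :: "'a \<Rightarrow> 'a"
  assumes tree: "rooted_tree V r par"
begin

lemma finV: "finite V" and rV: "r \<in> V" and par_r: "par r = r"
  and parV: "x \<in> V \<Longrightarrow> par x \<in> V" and ancr: "x \<in> V \<Longrightarrow> anc par r x"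
  using tree unfolding rooted_tree_def by auto

lemma pow_in: "x \<in> V \<Longrightarrow> (par ^^ k) x \<in> V"
  by (induction k) (auto simp: parV)

lemma anc_in: "anc par a b \<Longrightarrow> b \<in> V \<Longrightarrow> a \<in> V"
  unfolding anc_def using pow_in by auto

lemma anc_refl[simp]: "anc par a a"
  unfolding anc_def by (rule exI[of _ 0]) simp

lemma anc_trans: "anc par a b \<Longrightarrow> anc par b c \<Longrightarrow> anc par a c"
proof -
  assume "anc par a b" "anc par b c"
  then obtain i j where "(par ^^ i) b = a" "(par ^^ j) c = b" unfolding anc_def by blast
  then have "(par ^^ (i + j)) c = a" by (simp add: funpow_add)
  then show ?thesis unfolding anc_def by blast
qed

lemma anc_par: "anc par (par x) x"
proof -
  have "(par ^^ 1) x = par x" by simp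
  then show ?thesis unfolding anc_def by blast
qed

lemma pow_r: "(par ^^ k) r = r"
  by (induction k) (auto simp: par_r)

lemma anc_of_r: "anc par x r \<Longrightarrow> x = r"
  unfolding anc_def using pow_r by auto

lemma pow_fix: "par x = x \<Longrightarrow> (par ^^ k) x = x"
  by (induction k) auto

lemma par_fix: "x \<in> V \<Longrightarrow> par x = x \<Longrightarrow> x = r"
proof -
  assume "x \<in> V" "par x = x"
  then obtain k where "(par ^^ k) x = r" using ancr unfolding anc_def by blast
  then show "x = r" using pow_fix[OF \<open>par x = x\<close>, of k] by simp
qed

lemma depth_pow: "y \<in> V \<Longrightarrow> (par ^^ depth r par y) y = r"
proof -
  assume "y \<in> V"
  then obtain k where "(par ^^ k) y = r" using ancr unfolding anc_def by blast
  then show ?thesis unfolding depth_def by (rule LeastI)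
qed

lemma depth_le: "(par ^^ m) y = r \<Longrightarrow> depth r par y \<le> m"
  unfolding depth_def by (rule Least_le)

lemma depth_lt: assumes "anc par t y" "y \<in> V" "t \<noteq> y" shows "depth r par t < depth r par y"
proof -
  obtain k where k: "(par ^^ k) y = t" using assms(1) unfolding anc_def by auto
  have k0: "k > 0" using k assms(3) by (cases k) auto
  define m where "m = depth r par y"
  have m: "(par ^^ m) y = r" using depth_pow[OF assms(2)] m_def by simp
  show ?thesis
  proof (cases "k \<le> m")
    case True
    have "(par ^^ (m - k)) t = r" using m k True pow_split[of k m par y] by simp
    then have "depth r par t \<le> m - k" by (rule depth_le)
    then show ?thesis using k0 True m_def by simp
  next
    case False
    have "(par ^^ k) y = (par ^^ (k - m)) ((par ^^ m) y)"
      using False pow_split[of m k par y] by simp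
    then have "t = r" using k m pow_r by simp
    then have "depth r par t = 0" using depth_le[of 0 t] by simp
    moreover have "m \<noteq> 0"
    proof
      assume "m = 0" then have "y = r" using m by simp
      then show False using \<open>t = r\<close> assms(3) by simp
    qed
    ultimately show ?thesis using m_def by simp
  qed
qed

lemma anc_antisym: "anc par a b \<Longrightarrow> anc par b a \<Longrightarrow> b \<in> V \<Longrightarrow> a = b"
proof (rule ccontr)
  assume h: "anc par a b" "anc par b a" "b \<in> V" "a \<noteq> b"
  then have "a \<in> V" using anc_in by blast
  have "depth r par a < depth r par b" using depth_lt[OF h(1) h(3) h(4)] .
  moreover have "depth r par b < depth r par a" using depth_lt[OF h(2) \<open>a \<in> V\<close>] h(4) by blast
  ultimately show False by simp
qed

lemma anc_chain: assumes "anc par a z" "anc par b z" shows "anc par a b \<or> anc par b a"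
proof -
  obtain i j where i: "(par ^^ i) z = a" and j: "(par ^^ j) z = b"
    using assms unfolding anc_def by auto
  show ?thesis
  proof (cases "i \<le> j")
    case True
    then have "(par ^^ (j - i)) a = b" using i j pow_split[of i j par z] by simp
    then show ?thesis unfolding anc_def by auto
  next
    case False
    then have "(par ^^ (i - j)) b = a" using i j pow_split[of j i par z] by simp
    then show ?thesis unfolding anc_def by auto
  qed
qed

lemma anc_par_iff: assumes "x \<noteq> r" shows "anc par a x \<longleftrightarrow> a = x \<or> anc par a (par x)"
proof
  assume "anc par a x"
  then obtain k where k: "(par ^^ k) x = a" unfolding anc_def by auto
  show "a = x \<or> anc par a (par x)"
  proof (cases k)
    case 0 then show ?thesis using k by simp
  next
    case (Suc j) then have "(par ^^ j) (par x) = a" using k by (simp add: funpow_swap1)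
    then show ?thesis unfolding anc_def by auto
  qed
next
  assume "a = x \<or> anc par a (par x)"
  then show "anc par a x" using anc_par anc_trans by auto
qed

lemma not_anc_par: "x \<in> V \<Longrightarrow> x \<noteq> r \<Longrightarrow> \<not> anc par x (par x)"
proof
  assume "x \<in> V" "x \<noteq> r" "anc par x (par x)"
  have "x = par x" using anc_antisym[OF \<open>anc par x (par x)\<close> anc_par parV[OF \<open>x \<in> V\<close>]] .
  then have "par x = x" by (rule sym)
  then show False using par_fix[OF \<open>x \<in> V\<close>] \<open>x \<noteq> r\<close> by blast
qed

lemma aset_sub: "a \<in> V \<Longrightarrow> {x. anc par x a} \<subseteq> V"
  using anc_in by blast

lemma dset_fin: "a \<in> V \<Longrightarrow> b \<in> V \<Longrightarrow> finite (dset par a b)"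
proof -
  assume "a \<in> V" "b \<in> V"
  then have "dset par a b \<subseteq> V" unfolding dset_def using aset_sub by blast
  then show ?thesis using finV finite_subset by blast
qed

lemma dset_split: assumes "betw par a m b"
  shows "dset par a b = dset par a m \<union> dset par m b" "dset par a m \<inter> dset par m b = {}"
  using assms unfolding betw_def dset_def by blast+

lemma delta_split: assumes "betw par a m b" "a \<in> V" "b \<in> V" "m \<in> V"
  shows "delta par w a b = delta par w a m + delta par w m b"
  unfolding delta_dset dset_split(1)[OF assms(1)]
  by (rule sum.union_disjoint) (use dset_fin assms dset_split(2)[OF assms(1)] in auto)

lemma dset_ne: assumes "a \<in> V" "b \<in> V" "a \<noteq> b" shows "dset par a b \<noteq> {}"
proof
  assume "dset par a b = {}"
  then have e: "{x. anc par x a} = {x. anc par x b}" unfolding dset_def by blast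
  have "anc par a b" using e anc_refl[of a] by blast
  moreover have "anc par b a" using e anc_refl[of b] by blast
  ultimately show False using anc_antisym assms by blast
qed

lemma card_dec: assumes "betw par u y v" "u \<in> V" "y \<in> V" "v \<in> V" "u \<noteq> y"
  shows "card (dset par y v) < card (dset par u v)"
proof -
  have "card (dset par u v) = card (dset par u y) + card (dset par y v)"
    unfolding dset_split(1)[OF assms(1)]
    by (rule card_Un_disjoint) (use dset_fin assms dset_split(2)[OF assms(1)] in auto)
  moreover have "card (dset par u y) > 0" using dset_ne[of u y] dset_fin[of u y] assms by auto
  ultimately show ?thesis by simp
qed

lemma deepest_prop: assumes "finite X" "X \<noteq> {}" "\<forall>x\<in>X. anc par x z" "z \<in> V"
  shows "deepest r par X \<in> X \<and> (\<forall>y\<in>X. depth r par y \<le> depth r par (deepest r par X))"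
proof -
  obtain x where x: "x \<in> X" "\<forall>y\<in>X. depth r par y \<le> depth r par x"
    using ex_max_nat[OF assms(1,2), of "depth r par"] by blast
  have "deepest r par X = x" unfolding deepest_def
  proof (rule the_equality)
    show "x \<in> X \<and> (\<forall>y\<in>X. depth r par y \<le> depth r par x)" using x by blast
  next
    fix x' assume x': "x' \<in> X \<and> (\<forall>y\<in>X. depth r par y \<le> depth r par x')"
    have xV: "x \<in> V" "x' \<in> V" using x x' assms anc_in by blast+
    have "anc par x x' \<or> anc par x' x" using anc_chain assms(3) x x' by blast
    have d1: "depth r par x' \<le> depth r par x" using x x' by blast
    have d2: "depth r par x \<le> depth r par x'" using x x' by blast
    show "x' = x"
    proof (rule ccontr)
      assume ne: "x' \<noteq> x"
      from \<open>anc par x x' \<or> anc par x' x\<close> show False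
      proof
        assume "anc par x x'" then have "depth r par x < depth r par x'"
          using depth_lt xV(2) ne by blast
        then show False using d1 by simp
      next
        assume "anc par x' x" then have "depth r par x' < depth r par x"
          using depth_lt xV(1) ne by blast
        then show False using d2 by simp
      qed
    qed
  qed
  then show ?thesis using x by simp
qed

lemma highest_prop: assumes "finite X" "X \<noteq> {}" "\<forall>x\<in>X. anc par x z" "z \<in> V"
  shows "highest r par X \<in> X \<and> (\<forall>y\<in>X. depth r par (highest r par X) \<le> depth r par y)"
proof -
  obtain x where x: "x \<in> X" "\<forall>y\<in>X. depth r par x \<le> depth r par y"
    using ex_min_nat[OF assms(1,2), of "depth r par"] by blast
  have "highest r par X = x" unfolding highest_def
  proof (rule the_equality)
    show "x \<in> X \<and> (\<forall>y\<in>X. depth r par x \<le> depth r par y)" using x by blast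
  next
    fix x' assume x': "x' \<in> X \<and> (\<forall>y\<in>X. depth r par x' \<le> depth r par y)"
    have xV: "x \<in> V" "x' \<in> V" using x x' assms anc_in by blast+
    have "anc par x x' \<or> anc par x' x" using anc_chain assms(3) x x' by blast
    have d1: "depth r par x' \<le> depth r par x" using x x' by blast
    have d2: "depth r par x \<le> depth r par x'" using x x' by blast
    show "x' = x"
    proof (rule ccontr)
      assume ne: "x' \<noteq> x"
      from \<open>anc par x x' \<or> anc par x' x\<close> show False
      proof
        assume "anc par x x'" then have "depth r par x < depth r par x'"
          using depth_lt xV(2) ne by blast
        then show False using d1 by simp
      next
        assume "anc par x' x" then have "depth r par x' < depth r par x"
          using depth_lt xV(1) ne by blast
        then show False using d2 by simp
      qed
    qed
  qed
  then show ?thesis using x by simp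
qed

lemma child_prop: assumes "anc par x v" "x \<noteq> v" "v \<in> V"
  shows "isChild V r par (childToward V r par x v) x \<and> anc par (childToward V r par x v) v"
proof -
  define k where "k = (LEAST k. (par ^^ k) v = x)"
  obtain j where "(par ^^ j) v = x" using assms(1) unfolding anc_def by blast
  then have kx: "(par ^^ k) v = x" unfolding k_def by (rule LeastI)
  have k0: "k \<noteq> 0"
  proof
    assume "k = 0" then show False using kx assms(2) by simp
  qed
  define c where "c = (par ^^ (k - 1)) v"
  have "(par ^^ Suc (k - 1)) v = par c" unfolding c_def by simp
  moreover have "Suc (k - 1) = k" using k0 by simp
  ultimately have pc: "par c = x" using kx by simp
  have cx: "c \<noteq> x"
  proof
    assume "c = x" then have "(par ^^ (k - 1)) v = x" unfolding c_def .
    then have "k \<le> k - 1" unfolding k_def by (rule Least_le)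
    then show False using k0 by simp
  qed
  have cr: "c \<noteq> r" using pc cx par_r by auto
  have cV: "c \<in> V" unfolding c_def using pow_in assms(3) by blast
  have cv: "anc par c v" unfolding c_def anc_def by blast
  have ch: "isChild V r par c x" unfolding isChild_def using cr cV pc by blast
  have "childToward V r par x v = c" unfolding childToward_def
  proof (rule the_equality)
    show "isChild V r par c x \<and> anc par c v" using ch cv by blast
  next
    fix c' assume c': "isChild V r par c' x \<and> anc par c' v"
    then have c'r: "c' \<noteq> r" "par c' = x" "c' \<in> V" unfolding isChild_def by auto
    have "anc par c c' \<or> anc par c' c" using anc_chain cv c' by blast
    then show "c' = c"
    proof
      assume "anc par c c'"
      then have "c = c' \<or> anc par c x" using anc_par_iff[OF c'r(1)] c'r(2) by blast
      then show ?thesis using not_anc_par[OF cV cr] pc by auto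
    next
      assume "anc par c' c"
      then have "c' = c \<or> anc par c' x" using anc_par_iff[OF cr] pc by blast
      then show ?thesis using not_anc_par[OF c'r(3) c'r(1)] c'r(2) by auto
    qed
  qed
  then show ?thesis using ch cv by simp
qed


lemma betw_chain: "anc par a m \<Longrightarrow> anc par m b \<Longrightarrow> betw par a m b"
  unfolding betw_def using anc_trans by blast

lemma betw_chain_rev: "anc par b m \<Longrightarrow> anc par m a \<Longrightarrow> betw par a m b"
  unfolding betw_def using anc_trans by blast

lemma adj_par: assumes "x \<in> V" "x \<noteq> r" shows "adjG V r par c1 k x (par x)"
proof -
  have "par x \<noteq> x" using par_fix assms by blast
  then show ?thesis unfolding adjG_def tadj_def using assms parV by auto
qed

lemma adj_child: assumes "isChild V r par c x" "x \<in> V" shows "adjG V r par c1 k x c"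
proof -
  have c: "c \<in> V" "c \<noteq> r" "par c = x" using assms(1) unfolding isChild_def by auto
  have "c \<noteq> x" using par_fix c by metis
  then show ?thesis unfolding adjG_def tadj_def using assms c by auto
qed

lemma step:
  fixes c1 :: "'a \<Rightarrow> 'a" and k :: nat and u v :: 'a
  defines "C \<equiv> Cset V r par c1 k (Tsup V r par c1 k u)"
  assumes uC: "u \<in> C" and CV: "C \<subseteq> V"
    and Cadj: "\<forall>a\<in>C. \<forall>b\<in>C. a \<noteq> b \<longrightarrow> adjG V r par c1 k a b"
    and uV: "u \<in> V" and vV: "v \<in> V" and uv: "u \<noteq> v"
  shows "(rstep V r par c1 k u v = [v] \<and> adjG V r par c1 k u v) \<or>
    (\<exists>x y. rstep V r par c1 k u v = [x, y] \<and> (u = x \<or> adjG V r par c1 k u x)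
       \<and> adjG V r par c1 k x y \<and> x \<in> V \<and> y \<in> V \<and> betw par u x y \<and> betw par u y v \<and> y \<noteq> u)"
proof -
  have finC: "finite C" using CV finV finite_subset by blast
  show ?thesis
  proof (cases "adjG V r par c1 k u v")
    case True
    then show ?thesis unfolding rstep_def by simp
  next
    case nadj: False
    have vnC: "v \<in> C \<Longrightarrow> False" using Cadj uC uv nadj by blast
    show ?thesis
    proof (cases "anc par u v")
      case uav: True
      define X where "X = {x \<in> C. anc par x v}"
      define x where "x = deepest r par X"
      define y where "y = childToward V r par x v"
      have rs: "rstep V r par c1 k u v = [x, y]"
        unfolding rstep_def Let_def using nadj uav by (simp add: x_def y_def X_def C_def)
      have uX: "u \<in> X" using uC uav X_def by blast
      have finX: "finite X" using finC X_def by simp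
      have xp: "x \<in> X \<and> (\<forall>z\<in>X. depth r par z \<le> depth r par x)"
        unfolding x_def by (rule deepest_prop[OF finX _ _ vV]) (use uX X_def in auto)
      have xC: "x \<in> C" and xv: "anc par x v" using xp X_def by auto
      have xV: "x \<in> V" using xC CV by blast
      have dux: "depth r par u \<le> depth r par x" using xp uX by blast
      have ux: "anc par u x"
      proof -
        have "anc par u x \<or> anc par x u" using anc_chain[OF uav xv] .
        then show ?thesis
        proof
          assume xu: "anc par x u"
          show ?thesis
          proof (cases "x = u")
            case True then show ?thesis by simp
          next
            case False
            then have "depth r par x < depth r par u" using depth_lt[OF xu uV] by blast
            then show ?thesis using dux by simp
          qed
        qed
      qed
      have xnv: "x \<noteq> v" using vnC xC by blast
      have yp: "isChild V r par y x \<and> anc par y v" unfolding y_def by (rule child_prop[OF xv xnv vV])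
      have yV: "y \<in> V" "y \<noteq> r" "par y = x" using yp unfolding isChild_def by auto
      have xy: "anc par x y" using anc_par[of y] yV by simp
      have yv: "anc par y v" using yp by blast
      have b1: "betw par u x y" by (rule betw_chain[OF ux xy])
      have b2: "betw par u y v" by (rule betw_chain[OF anc_trans[OF ux xy] yv])
      have yu: "y \<noteq> u"
      proof
        assume "y = u"
        then have "anc par y (par y)" using ux yV by simp
        then show False using not_anc_par yV by blast
      qed
      have a1: "u = x \<or> adjG V r par c1 k u x" using Cadj uC xC by blast
      have a2: "adjG V r par c1 k x y" using adj_child yp xV by blast
      show ?thesis using rs a1 a2 xV yV b1 b2 yu by blast
    next
      case nuav: False
      show ?thesis
      proof (cases "anc par v u")
        case vau: True
        define X where "X = {x \<in> C. anc par v x \<and> anc par x u}"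
        define x where "x = highest r par X"
        have rs: "rstep V r par c1 k u v = [x, par x]"
          unfolding rstep_def Let_def using nadj nuav vau by (simp add: x_def X_def C_def)
        have uX: "u \<in> X" using uC vau X_def by simp
        have finX: "finite X" using finC X_def by simp
        have xp: "x \<in> X"
          unfolding x_def using highest_prop[OF finX _ _ uV] uX X_def by blast
        have xC: "x \<in> C" and vx: "anc par v x" and xu: "anc par x u" using xp X_def by auto
        have xV: "x \<in> V" using xC CV by blast
        have xnv: "x \<noteq> v" using vnC xC by blast
        have xr: "x \<noteq> r" using anc_of_r vx xnv by blast
        have yV: "par x \<in> V" using parV xV by blast
        have vy: "anc par v (par x)" using anc_par_iff[OF xr, of v] vx xnv by blast
        have yx: "anc par (par x) x" by (rule anc_par)
        have b1: "betw par u x (par x)" by (rule betw_chain_rev[OF yx xu])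
        have b2: "betw par u (par x) v" by (rule betw_chain_rev[OF vy anc_trans[OF yx xu]])
        have yu: "par x \<noteq> u"
        proof
          assume "par x = u"
          then have "anc par x (par x)" using xu by simp
          then show False using not_anc_par xV xr by blast
        qed
        have a1: "u = x \<or> adjG V r par c1 k u x" using Cadj uC xC by blast
        have a2: "adjG V r par c1 k x (par x)" using adj_par xV xr by blast
        show ?thesis using rs a1 a2 xV yV b1 b2 yu by blast
      next
        case nvau: False
        define X where "X = {x \<in> C. anc par x v \<and> \<not> anc par x u}"
        define Y where "Y = {y \<in> C. anc par y u \<and> \<not> anc par y v}"
        show ?thesis
        proof (cases "X = {}")
          case True
          define y where "y = highest r par Y"
          have rs: "rstep V r par c1 k u v = [y, par y]"
            unfolding rstep_def Let_def using nadj nuav nvau True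
            by (simp add: y_def X_def Y_def C_def)
          have uY: "u \<in> Y" using uC nuav Y_def by simp
          have finY: "finite Y" using finC Y_def by simp
          have yp: "y \<in> Y"
            unfolding y_def using highest_prop[OF finY _ _ uV] uY Y_def by blast
          have yC: "y \<in> C" and yu: "anc par y u" and nyv: "\<not> anc par y v" using yp Y_def by auto
          have yV: "y \<in> V" using yC CV by blast
          have yr: "y \<noteq> r" using nyv ancr vV by blast
          have zV: "par y \<in> V" using parV yV by blast
          have zy: "anc par (par y) y" by (rule anc_par)
          have b1: "betw par u y (par y)" by (rule betw_chain_rev[OF zy yu])
          have b2: "betw par u (par y) v" unfolding betw_def
          proof (intro conjI subsetI)
            fix a assume "a \<in> {x. anc par x u} \<inter> {x. anc par x v}"
            then have au: "anc par a u" and av: "anc par a v" by auto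
            have "anc par a y"
            proof -
              have "anc par a y \<or> anc par y a" using anc_chain[OF au yu] .
              then show ?thesis using anc_trans[OF _ av] nyv by blast
            qed
            moreover have "a \<noteq> y" using av nyv by blast
            ultimately show "a \<in> {x. anc par x (par y)}" using anc_par_iff[OF yr] by blast
          next
            fix a assume "a \<in> {x. anc par x (par y)}"
            then show "a \<in> {x. anc par x u} \<union> {x. anc par x v}"
              using anc_trans[OF _ anc_trans[OF zy yu]] by blast
          qed
          have zu: "par y \<noteq> u"
          proof
            assume "par y = u"
            then have "anc par y (par y)" using yu by simp
            then show False using not_anc_par yV yr by blast
          qed
          have a1: "u = y \<or> adjG V r par c1 k u y" using Cadj uC yC by blast
          have a2: "adjG V r par c1 k y (par y)" using adj_par yV yr by blast
          show ?thesis using rs a1 a2 yV zV b1 b2 zu by blast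
        next
          case False
          define x where "x = deepest r par X"
          define y where "y = childToward V r par x v"
          have rs: "rstep V r par c1 k u v = [x, y]"
            unfolding rstep_def Let_def C_def[symmetric] X_def[symmetric] Y_def[symmetric]
            using nadj nuav nvau False by (simp add: x_def y_def)
          have finX: "finite X" using finC X_def by simp
          have xp: "x \<in> X"
            unfolding x_def using deepest_prop[OF finX False _ vV] X_def by blast
          have xC: "x \<in> C" and xv: "anc par x v" and nxu: "\<not> anc par x u" using xp X_def by auto
          have xV: "x \<in> V" using xC CV by blast
          have xnv: "x \<noteq> v" using vnC xC by blast
          have yp: "isChild V r par y x \<and> anc par y v" unfolding y_def by (rule child_prop[OF xv xnv vV])
          have yV: "y \<in> V" "y \<noteq> r" "par y = x" using yp unfolding isChild_def by auto
          have xy: "anc par x y" using anc_par[of y] yV by simp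
          have yv: "anc par y v" using yp by blast
          have nyu: "\<not> anc par y u" using anc_trans[OF xy] nxu by blast
          have b1: "betw par u x y" unfolding betw_def
          proof (intro conjI subsetI)
            fix a assume "a \<in> {x. anc par x u} \<inter> {x. anc par x y}"
            then have au: "anc par a u" and ay: "anc par a y" by auto
            have "a = y \<or> anc par a (par y)" using anc_par_iff[OF yV(2)] ay by blast
            then show "a \<in> {z. anc par z x}" using au nyu yV(3) by auto
          next
            fix a assume "a \<in> {z. anc par z x}"
            then show "a \<in> {x. anc par x u} \<union> {x. anc par x y}" using anc_trans[OF _ xy] by blast
          qed
          have b2: "betw par u y v" unfolding betw_def
          proof (intro conjI subsetI)
            fix a assume "a \<in> {x. anc par x u} \<inter> {x. anc par x v}"
            then have au: "anc par a u" and av: "anc par a v" by auto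
            have "anc par a y \<or> anc par y a" using anc_chain[OF av yv] .
            then show "a \<in> {x. anc par x y}" using anc_trans[OF _ au] nyu by blast
          next
            fix a assume "a \<in> {z. anc par z y}"
            then show "a \<in> {x. anc par x u} \<union> {x. anc par x v}" using anc_trans[OF _ yv] by blast
          qed
          have yu: "y \<noteq> u" using yv nuav by blast
          have a1: "u = x \<or> adjG V r par c1 k u x" using Cadj uC xC by blast
          have a2: "adjG V r par c1 k x y" using adj_child yp xV by blast
          show ?thesis using rs a1 a2 xV yV b1 b2 yu by blast
        qed
      qed
    qed
  qed
qed


end



lemma funpow_fixed: "f z = z \<Longrightarrow> (f ^^ n) z = z"
  by (induction n) auto

definition radj :: "'a set \<Rightarrow> 'a \<Rightarrow> ('a \<Rightarrow> 'a) \<Rightarrow> 'a set \<Rightarrow> 'a \<Rightarrow> 'a \<Rightarrow> bool" where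
  "radj V r par A = (\<lambda>a b. a \<in> A \<and> b \<in> A \<and> tadj V r par a b)"

lemma conn_in_radj: "conn_in V r par A x y \<longleftrightarrow> x \<in> A \<and> y \<in> A \<and> (radj V r par A)\<^sup>*\<^sup>* x y"
  unfolding conn_in_def radj_def by (rule refl)

lemma radj_sym: "symp (radj V r par A)"
  unfolding radj_def tadj_def by (rule sympI) blast

lemma rt_sym: assumes "(radj V r par A)\<^sup>*\<^sup>* a b" shows "(radj V r par A)\<^sup>*\<^sup>* b a"
  using sympD[OF symp_rtranclp[OF radj_sym] assms] .

definition conn_set :: "'a set \<Rightarrow> 'a \<Rightarrow> ('a \<Rightarrow> 'a) \<Rightarrow> 'a set \<Rightarrow> bool" where
  "conn_set V r par Y \<longleftrightarrow> (\<forall>a\<in>Y. \<forall>b\<in>Y. conn_in V r par Y a b)"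

lemma comp_sub: "X \<in> components V r par A \<Longrightarrow> X \<subseteq> A \<and> X \<noteq> {}"
  unfolding components_def conn_in_radj by auto

lemma comp_conn: assumes "X \<in> components V r par A" shows "conn_set V r par X"
proof -
  obtain x where x: "x \<in> A" "X = {y. conn_in V r par A x y}" using assms unfolding components_def by blast
  have reach: "(radj V r par X)\<^sup>*\<^sup>* x y" if "(radj V r par A)\<^sup>*\<^sup>* x y" for y
    using that
  proof (induction rule: rtranclp_induct)
    case base then show ?case by simp
  next
    case (step y z)
    have yz: "y \<in> A" "z \<in> A" "tadj V r par y z" using step.hyps(2) unfolding radj_def by auto
    have "y \<in> X" using x step.hyps(1) yz unfolding conn_in_radj by blast
    moreover have "z \<in> X" using x step.hyps yz unfolding conn_in_radj by auto
    ultimately have "radj V r par X y z" using yz unfolding radj_def by blast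
    then show ?case by (rule rtranclp.rtrancl_into_rtrancl[OF step.IH])
  qed
  show ?thesis unfolding conn_set_def
  proof (intro ballI)
    fix a b assume ab: "a \<in> X" "b \<in> X"
    then have xa: "(radj V r par X)\<^sup>*\<^sup>* x a" and xb: "(radj V r par X)\<^sup>*\<^sup>* x b"
      using x reach unfolding conn_in_radj by auto
    have "(radj V r par X)\<^sup>*\<^sup>* a b" by (rule rtranclp_trans[OF rt_sym[OF xa] xb])
    then show "conn_in V r par X a b" using ab unfolding conn_in_radj by blast
  qed
qed

lemma absorb: assumes "X \<in> components V r par A" "Y \<subseteq> A" "conn_set V r par Y" "y0 \<in> X" "y0 \<in> Y"
  shows "Y \<subseteq> X"
proof
  fix y assume y: "y \<in> Y"
  obtain x where x: "x \<in> A" "X = {y. conn_in V r par A x y}" using assms(1) unfolding components_def by blast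
  have "(radj V r par Y)\<^sup>*\<^sup>* y0 y" using assms(3,5) y unfolding conn_set_def conn_in_radj by blast
  moreover have "radj V r par Y \<le> radj V r par A" using assms(2) unfolding radj_def by auto
  ultimately have "(radj V r par A)\<^sup>*\<^sup>* y0 y" using rtranclp_mono by blast
  moreover have "(radj V r par A)\<^sup>*\<^sup>* x y0" using assms(4) x unfolding conn_in_radj by blast
  ultimately have "(radj V r par A)\<^sup>*\<^sup>* x y" by (rule rtranclp_trans[rotated])
  then show "y \<in> X" using x y assms(2) by (auto simp: conn_in_radj)
qed

context rtree begin

lemma lstep_in: "x \<in> S \<Longrightarrow> lstep V r par c1 S x \<in> S"
  unfolding lstep_def by simp

lemma lstep_pow_in: "x \<in> S \<Longrightarrow> (lstep V r par c1 S ^^ j) x \<in> S"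
  by (induction j) (auto simp: lstep_in)

lemma bd_some: "bd V r par c1 S d x = Some b \<Longrightarrow> \<exists>j. b = (lstep V r par c1 S ^^ j) x"
  unfolding bd_def by (auto split: if_splits)

lemma rt_eq: assumes "S \<subseteq> V" "t \<in> S" "\<forall>y\<in>S. anc par t y" shows "rt r par S = t"
  unfolding rt_def
proof (rule the_equality)
  show "t \<in> S \<and> (\<forall>y\<in>S. y \<noteq> t \<longrightarrow> depth r par t < depth r par y)"
    using assms depth_lt by blast
next
  fix x assume x: "x \<in> S \<and> (\<forall>y\<in>S. y \<noteq> x \<longrightarrow> depth r par x < depth r par y)"
  show "x = t"
  proof (rule ccontr)
    assume ne: "x \<noteq> t"
    then have "t \<noteq> x" by simp
    then have "depth r par x < depth r par t" using x assms(2) by blast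
    moreover have "depth r par t < depth r par x" using depth_lt[of t x] assms x ne by blast
    ultimately show False by simp
  qed
qed

lemma sub_rt: assumes "S \<subseteq> V" "w \<in> S" shows "rt r par (sub par S w) = w"
  by (rule rt_eq) (use assms in \<open>auto simp: sub_def\<close>)

lemma CV_sub: "CV V r par c1 d S x \<Longrightarrow> S \<subseteq> V \<Longrightarrow> rt r par S \<in> S \<Longrightarrow> x \<in> S"
proof (induction rule: CV.induct)
  case (CV_here S b)
  then obtain j where "b = (lstep V r par c1 S ^^ j) (rt r par S)" using bd_some by blast
  then show ?case using lstep_pow_in CV_here.prems by simp
next
  case (CV_rec S b w x)
  have s: "sub par S w \<subseteq> V" using CV_rec.prems unfolding sub_def by auto
  have "rt r par (sub par S w) = w" using sub_rt CV_rec.prems CV_rec.hyps by blast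
  moreover have "w \<in> sub par S w" using CV_rec.hyps unfolding sub_def by simp
  ultimately have "x \<in> sub par S w" using CV_rec.IH s by simp
  then show ?case unfolding sub_def by simp
qed

lemma lstep_move: "lstep V r par c1 S z \<noteq> z \<Longrightarrow> isChild V r par (c1 z) z \<and> lstep V r par c1 S z = c1 z"
  unfolding lstep_def by (auto split: if_splits)

lemma lend_in: assumes "S \<subseteq> V" "x \<in> S" shows "lend V r par c1 S x \<in> S"
proof -
  define f where "f = lstep V r par c1 S"
  have fin: "(f ^^ j) x \<in> S" for j unfolding f_def using lstep_pow_in assms by blast
  have ex: "\<exists>j. f ((f ^^ j) x) = (f ^^ j) x"
  proof (rule ccontr)
    assume nf: "\<not> (\<exists>j. f ((f ^^ j) x) = (f ^^ j) x)"
    have dj: "j \<le> depth r par ((f ^^ j) x)" for j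
    proof (induction j)
      case 0 then show ?case by simp
    next
      case (Suc j)
      define z where "z = (f ^^ j) x"
      have fz: "f z \<noteq> z" using nf z_def by blast
      then have ch: "isChild V r par (c1 z) z" "f z = c1 z" using lstep_move unfolding f_def by blast+
      then have pz: "par (f z) = z" "f z \<in> V" unfolding isChild_def by auto
      have "anc par z (f z)" using anc_par[of "f z"] pz by simp
      moreover have "z \<noteq> f z" using fz by simp
      ultimately have "depth r par z < depth r par (f z)" using depth_lt pz by blast
      moreover have "(f ^^ Suc j) x = f z" unfolding z_def by simp
      ultimately show ?case using Suc.IH z_def by simp
    qed
    define M where "M = Max (depth r par ` V)"
    have "(f ^^ Suc M) x \<in> V" using fin assms(1) by blast
    then have "depth r par ((f ^^ Suc M) x) \<le> M" unfolding M_def using finV by simp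
    then show False using dj[of "Suc M"] by simp
  qed
  then obtain j0 where j0: "f ((f ^^ j0) x) = (f ^^ j0) x" by blast
  have "lend V r par c1 S x = (f ^^ j0) x" unfolding lend_def f_def[symmetric]
  proof (rule the_equality)
    show "(\<exists>j. (f ^^ j) x = (f ^^ j0) x) \<and> f ((f ^^ j0) x) = (f ^^ j0) x" using j0 by blast
  next
    fix y assume y: "(\<exists>j. (f ^^ j) x = y) \<and> f y = y"
    then obtain i where i: "(f ^^ i) x = y" "f y = y" by blast
    show "y = (f ^^ j0) x"
    proof (cases "i \<le> j0")
      case True
      have "(f ^^ j0) x = (f ^^ (j0 - i)) ((f ^^ i) x)" using pow_split[OF True] .
      then show ?thesis using i funpow_fixed[of f y] by simp
    next
      case False
      then have "j0 \<le> i" by simp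
      have "(f ^^ i) x = (f ^^ (i - j0)) ((f ^^ j0) x)" using pow_split[OF \<open>j0 \<le> i\<close>] .
      then show ?thesis using i j0 funpow_fixed[of f "(f ^^ j0) x"] by simp
    qed
  qed
  then show ?thesis using fin by simp
qed

lemma Cset_sub: assumes "S \<subseteq> V" "rt r par S \<in> S" shows "Cset V r par c1 k S \<subseteq> S"
  unfolding Cset_def using CV_sub[OF _ assms] lend_in[OF assms] assms by auto

lemma rt_in_Cset: "rt r par S \<in> S \<Longrightarrow> rt r par S \<in> Cset V r par c1 k S"
  unfolding Cset_def by auto

lemma V_conn: "conn_set V r par V"
proof -
  have up: "(radj V r par V)\<^sup>*\<^sup>* a ((par ^^ j) a)" if "a \<in> V" for a j
  proof (induction j)
    case 0 then show ?case by simp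
  next
    case (Suc j)
    define z where "z = (par ^^ j) a"
    have zV: "z \<in> V" using pow_in that z_def by blast
    have "(radj V r par V)\<^sup>*\<^sup>* z (par z)"
    proof (cases "z = r")
      case True then show ?thesis using par_r by simp
    next
      case False
      then have "radj V r par V z (par z)" unfolding radj_def tadj_def using zV parV by blast
      then show ?thesis by blast
    qed
    then show ?case using Suc.IH z_def by simp
  qed
  have tor: "(radj V r par V)\<^sup>*\<^sup>* a r" if aV: "a \<in> V" for a
  proof -
    obtain j where "(par ^^ j) a = r" using ancr[OF aV] unfolding anc_def by blast
    then show ?thesis using up[OF aV, of j] by simp
  qed
  show ?thesis unfolding conn_set_def conn_in_radj
  proof (intro ballI conjI)
    fix a b assume "a \<in> V" "b \<in> V"
    then show "(radj V r par V)\<^sup>*\<^sup>* a b" using rtranclp_trans[OF tor rt_sym[OF tor]] by blast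
  qed
qed

lemma conn_top: assumes "conn_set V r par S" "S \<subseteq> V" "S \<noteq> {}" shows "\<exists>t\<in>S. \<forall>y\<in>S. anc par t y"
proof -
  have finS: "finite S" using assms(2) finV finite_subset by blast
  obtain t where t: "t \<in> S" "\<forall>y\<in>S. depth r par t \<le> depth r par y"
    using ex_min_nat[OF finS assms(3), of "depth r par"] by blast
  have tV: "t \<in> V" using t assms(2) by blast
  have "anc par t z" if "(radj V r par S)\<^sup>*\<^sup>* t z" for z
    using that
  proof (induction rule: rtranclp_induct)
    case base then show ?case by simp
  next
    case (step y z)
    have yz: "y \<in> S" "z \<in> S" "tadj V r par y z" using step.hyps(2) unfolding radj_def by auto
    have "(y \<noteq> r \<and> par y = z) \<or> (z \<noteq> r \<and> par z = y)" using yz(3) unfolding tadj_def by blast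
    then show ?case
    proof
      assume h: "y \<noteq> r \<and> par y = z"
      show ?case
      proof (cases "t = y")
        case True
        have "par t \<noteq> t" using par_fix tV h True by blast
        then have "depth r par (par t) < depth r par t" using depth_lt[OF anc_par tV] by blast
        moreover have "par t \<in> S" using yz h True by simp
        moreover have "depth r par t \<le> depth r par (par t)" using t(2) \<open>par t \<in> S\<close> by blast
        ultimately show ?thesis by simp
      next
        case False
        then show ?thesis using anc_par_iff[of y t] h step.IH by blast
      qed
    next
      assume h: "z \<noteq> r \<and> par z = y"
      then show ?case using anc_trans[OF step.IH, of z] anc_par[of z] by simp
    qed
  qed
  then show ?thesis using t assms(1) unfolding conn_set_def conn_in_radj by blast
qed

lemma canon_props: "canonical V r par c1 k S \<Longrightarrow> S \<subseteq> V \<and> S \<noteq> {} \<and> conn_set V r par S"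
proof (induction rule: canonical.induct)
  case canon_T
  have "V \<noteq> {}" using rV by blast
  then show ?case using V_conn by simp
next
  case (canon_comp S X)
  have a: "X \<subseteq> S - Cset V r par c1 k S" "X \<noteq> {}" using comp_sub[OF canon_comp.hyps(2)] by auto
  have b: "S \<subseteq> V" using canon_comp.IH by simp
  have "X \<subseteq> V" using a(1) b by blast
  then show ?case using a(2) comp_conn[OF canon_comp.hyps(2)] by simp
qed

lemma canon_rt: assumes "canonical V r par c1 k S" shows "rt r par S \<in> S"
proof -
  have p: "S \<subseteq> V" "S \<noteq> {}" "conn_set V r par S" using canon_props[OF assms] by auto
  obtain t where "t \<in> S" "\<forall>y\<in>S. anc par t y" using conn_top[OF p(3) p(1) p(2)] by blast
  then show ?thesis using rt_eq[OF p(1)] by simp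
qed

lemma canon_Cset: assumes "canonical V r par c1 k S" shows "Cset V r par c1 k S \<subseteq> S"
proof -
  have "S \<subseteq> V" using canon_props[OF assms] by simp
  then show ?thesis using Cset_sub canon_rt[OF assms] by simp
qed

lemma canon_root_or_sub: "canonical V r par c1 k B \<Longrightarrow> B = V \<or> B \<subseteq> V - Cset V r par c1 k V"
proof (induction rule: canonical.induct)
  case canon_T then show ?case by simp
next
  case (canon_comp S X)
  have "X \<subseteq> S - Cset V r par c1 k S" using comp_sub[OF canon_comp.hyps(2)] by simp
  then have "X \<subseteq> S" by blast
  from canon_comp.IH show ?case
  proof
    assume "S = V" then show ?case using \<open>X \<subseteq> S - Cset V r par c1 k S\<close> by simp
  next
    assume "S \<subseteq> V - Cset V r par c1 k V" then show ?case using \<open>X \<subseteq> S\<close> by (intro disjI2) blast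
  qed
qed


lemma laminar:
  assumes "canonical V r par c1 k A" "canonical V r par c1 k B"
  shows "A \<inter> B = {} \<or> A \<subseteq> B - Cset V r par c1 k B \<or> B \<subseteq> A - Cset V r par c1 k A \<or> A = B"
  using assms
proof (induction arbitrary: B rule: canonical.induct)
  case canon_T
  from canon_root_or_sub[OF canon_T] show ?case
  proof
    assume "B = V" then show ?thesis by simp
  next
    assume "B \<subseteq> V - Cset V r par c1 k V" then show ?thesis by simp
  qed
next
  case (canon_comp S X)
  note IHS = canon_comp.IH
  have cS: "canonical V r par c1 k S" using canon_comp.hyps(1) .
  have XcompS: "X \<in> components V r par (S - Cset V r par c1 k S)" using canon_comp.hyps(2) .
  have cX: "canonical V r par c1 k X" by (rule canonical.canon_comp[OF cS XcompS])
  have Xsub: "X \<subseteq> S - Cset V r par c1 k S" "X \<noteq> {}" using comp_sub[OF XcompS] by auto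
  have Xconn: "conn_set V r par X" using canon_props[OF cX] by simp
  from canon_comp.prems show ?case
  proof (induction rule: canonical.induct)
    case canon_T
    from canon_root_or_sub[OF cX] show ?case
    proof
      assume "X = V" then show ?thesis by simp
    next
      assume "X \<subseteq> V - Cset V r par c1 k V" then show ?thesis by simp
    qed
  next
    case (canon_comp S' B)
    have cS': "canonical V r par c1 k S'" using canon_comp.hyps(1) .
    have BcompS': "B \<in> components V r par (S' - Cset V r par c1 k S')" using canon_comp.hyps(2) .
    have cB: "canonical V r par c1 k B" by (rule canonical.canon_comp[OF cS' BcompS'])
    have Bsub: "B \<subseteq> S' - Cset V r par c1 k S'" "B \<noteq> {}" using comp_sub[OF BcompS'] by auto
    have Bconn: "conn_set V r par B" using canon_props[OF cB] by simp
    have relSB: "S \<inter> B = {} \<or> S \<subseteq> B - Cset V r par c1 k B \<or> B \<subseteq> S - Cset V r par c1 k S \<or> S = B"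
      using IHS[OF cB] .
    have relXS': "X \<inter> S' = {} \<or> X \<subseteq> S' - Cset V r par c1 k S' \<or> S' \<subseteq> X - Cset V r par c1 k X \<or> X = S'"
      using canon_comp.IH .
    show ?case
    proof (cases "X \<inter> B = {}")
      case True then show ?thesis by simp
    next
      case XB: False
      then obtain y0 where y0: "y0 \<in> X" "y0 \<in> B" by blast
      have c1': "X \<inter> S' = {} \<Longrightarrow> ?thesis" using Bsub y0 by blast
      have c2': "X \<subseteq> S' - Cset V r par c1 k S' \<Longrightarrow> ?thesis"
      proof -
        assume XS': "X \<subseteq> S' - Cset V r par c1 k S'"
        have XB: "X \<subseteq> B" by (rule absorb[OF BcompS' XS' Xconn y0(2) y0(1)])
        from relSB show ?thesis
        proof (elim disjE)
          assume "S \<inter> B = {}" then show ?thesis using Xsub XB by blast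
        next
          assume "S \<subseteq> B - Cset V r par c1 k B" then show ?thesis using Xsub(1) by blast
        next
          assume BS: "B \<subseteq> S - Cset V r par c1 k S"
          have "B \<subseteq> X" by (rule absorb[OF XcompS BS Bconn y0(1) y0(2)])
          then show ?thesis using XB by blast
        next
          assume "S = B" then show ?thesis using Xsub(1) by blast
        qed
      qed
      have c3': "S' \<subseteq> X - Cset V r par c1 k X \<Longrightarrow> ?thesis" using Bsub by blast
      have c4': "X = S' \<Longrightarrow> ?thesis" using Bsub by blast
      from relXS' show ?thesis using c1' c2' c3' c4' by blast
    qed
  qed
qed

lemma exists_C: "canonical V r par c1 k S \<Longrightarrow> u \<in> S \<Longrightarrow> \<exists>S'. canonical V r par c1 k S' \<and> u \<in> Cset V r par c1 k S'"
proof (induction "card S" arbitrary: S rule: less_induct)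
  case less
  show ?case
  proof (cases "u \<in> Cset V r par c1 k S")
    case True then show ?thesis using less.prems by blast
  next
    case False
    define A where "A = S - Cset V r par c1 k S"
    define X where "X = {y. conn_in V r par A u y}"
    have uA: "u \<in> A" using False less.prems A_def by blast
    have Xc: "X \<in> components V r par A" unfolding components_def X_def using uA by blast
    have uX: "u \<in> X" unfolding X_def conn_in_radj using uA by simp
    have cX: "canonical V r par c1 k X" using canonical.canon_comp[OF less.prems(1)] Xc A_def by blast
    have XA: "X \<subseteq> A" using comp_sub[OF Xc] by simp
    have rtS: "rt r par S \<in> S" using canon_rt[OF less.prems(1)] .
    have "rt r par S \<in> Cset V r par c1 k S" using rt_in_Cset[OF rtS] .
    then have "X \<subset> S" using XA rtS A_def by blast
    moreover have "finite S" using canon_props[OF less.prems(1)] finV finite_subset by blast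
    ultimately have "card X < card S" by (rule psubset_card_mono[rotated])
    then show ?thesis using less.hyps cX uX by blast
  qed
qed

lemma Tsup_prop: assumes "u \<in> V"
  shows "canonical V r par c1 k (Tsup V r par c1 k u) \<and> u \<in> Cset V r par c1 k (Tsup V r par c1 k u)"
proof -
  have ex: "\<exists>S. canonical V r par c1 k S \<and> u \<in> Cset V r par c1 k S"
    using exists_C[OF canonical.canon_T assms] .
  have un: "A = B" if "canonical V r par c1 k A \<and> u \<in> Cset V r par c1 k A"
     "canonical V r par c1 k B \<and> u \<in> Cset V r par c1 k B" for A B
  proof -
    have cA: "canonical V r par c1 k A" and uA: "u \<in> Cset V r par c1 k A" using that(1) by auto
    have cB: "canonical V r par c1 k B" and uB: "u \<in> Cset V r par c1 k B" using that(2) by auto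
    have sA: "Cset V r par c1 k A \<subseteq> A" using canon_Cset[OF cA] .
    have sB: "Cset V r par c1 k B \<subseteq> B" using canon_Cset[OF cB] .
    from laminar[OF cA cB] show "A = B"
    proof (elim disjE)
      assume "A \<inter> B = {}" then show ?thesis using sA sB uA uB by blast
    next
      assume "A \<subseteq> B - Cset V r par c1 k B" then show ?thesis using sA uA uB by blast
    next
      assume "B \<subseteq> A - Cset V r par c1 k A" then show ?thesis using sB uA uB by blast
    qed
  qed
  have "\<exists>!S. canonical V r par c1 k S \<and> u \<in> Cset V r par c1 k S" using ex un by blast
  then show ?thesis unfolding Tsup_def by (rule theI')
qed

lemma key: assumes "u \<in> V"
  shows "u \<in> Cset V r par c1 k (Tsup V r par c1 k u)
      \<and> Cset V r par c1 k (Tsup V r par c1 k u) \<subseteq> V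
      \<and> (\<forall>a\<in>Cset V r par c1 k (Tsup V r par c1 k u). \<forall>b\<in>Cset V r par c1 k (Tsup V r par c1 k u).
             a \<noteq> b \<longrightarrow> adjG V r par c1 k a b)"
proof -
  have tp: "canonical V r par c1 k (Tsup V r par c1 k u)" "u \<in> Cset V r par c1 k (Tsup V r par c1 k u)"
    using Tsup_prop[OF assms] by auto
  have "Cset V r par c1 k (Tsup V r par c1 k u) \<subseteq> Tsup V r par c1 k u" using canon_Cset[OF tp(1)] .
  moreover have "Tsup V r par c1 k u \<subseteq> V" using canon_props[OF tp(1)] by simp
  ultimately have CV: "Cset V r par c1 k (Tsup V r par c1 k u) \<subseteq> V" by blast
  have "\<forall>a\<in>Cset V r par c1 k (Tsup V r par c1 k u). \<forall>b\<in>Cset V r par c1 k (Tsup V r par c1 k u).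
             a \<noteq> b \<longrightarrow> adjG V r par c1 k a b"
  proof (intro ballI impI)
    fix a b assume ab: "a \<in> Cset V r par c1 k (Tsup V r par c1 k u)" "b \<in> Cset V r par c1 k (Tsup V r par c1 k u)" "a \<noteq> b"
    then show "adjG V r par c1 k a b" unfolding adjG_def using CV tp(1) by blast
  qed
  then show ?thesis using tp(2) CV by blast
qed

end


context rtree begin

lemma main:
  fixes c1 :: "'a \<Rightarrow> 'a" and k :: nat and v :: 'a and w :: "'a \<Rightarrow> real"
  assumes key: "\<And>u. u \<in> V \<Longrightarrow> u \<in> Cset V r par c1 k (Tsup V r par c1 k u)
      \<and> Cset V r par c1 k (Tsup V r par c1 k u) \<subseteq> V
      \<and> (\<forall>a\<in>Cset V r par c1 k (Tsup V r par c1 k u). \<forall>b\<in>Cset V r par c1 k (Tsup V r par c1 k u).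
             a \<noteq> b \<longrightarrow> adjG V r par c1 k a b)"
    and vV: "v \<in> V"
  shows "u \<in> V \<Longrightarrow> \<exists>n. last (walk V r par c1 k n u v) = v
     \<and> okw (adjG V r par c1 k) (walk V r par c1 k n u v)
     \<and> walk_weight par w (walk V r par c1 k n u v) = delta par w u v"
proof (induction "card (dset par u v)" arbitrary: u rule: less_induct)
  case less
  show ?case
  proof (cases "u = v")
    case True
    have "last (walk V r par c1 k 0 u v) = v \<and> okw (adjG V r par c1 k) (walk V r par c1 k 0 u v)
     \<and> walk_weight par w (walk V r par c1 k 0 u v) = delta par w u v"
      using True by (simp add: okw_single ww_single delta_self)
    then show ?thesis by blast
  next
    case uv: False
    have st: "(rstep V r par c1 k u v = [v] \<and> adjG V r par c1 k u v) \<or>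
    (\<exists>x y. rstep V r par c1 k u v = [x, y] \<and> (u = x \<or> adjG V r par c1 k u x)
       \<and> adjG V r par c1 k x y \<and> x \<in> V \<and> y \<in> V \<and> betw par u x y \<and> betw par u y v \<and> y \<noteq> u)"
    proof -
      note K = key[OF less.prems]
      show ?thesis by (rule step[OF K[THEN conjunct1] K[THEN conjunct2, THEN conjunct1]
          K[THEN conjunct2, THEN conjunct2] less.prems vV uv])
    qed
    then show ?thesis
    proof
      assume h: "rstep V r par c1 k u v = [v] \<and> adjG V r par c1 k u v"
      have wk: "walk V r par c1 k (Suc 0) u v = [u, v]" using h uv by simp
      have "okw (adjG V r par c1 k) [u, v]" by (rule okw_cons[OF okw_single]) (use h in blast)
      moreover have "walk_weight par w [u, v] = delta par w u v" by (simp add: ww_cons ww_single)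
      moreover have "last [u, v] = v" by simp
      ultimately have "last (walk V r par c1 k (Suc 0) u v) = v
     \<and> okw (adjG V r par c1 k) (walk V r par c1 k (Suc 0) u v)
     \<and> walk_weight par w (walk V r par c1 k (Suc 0) u v) = delta par w u v" unfolding wk by blast
      then show ?thesis by blast
    next
      assume "\<exists>x y. rstep V r par c1 k u v = [x, y] \<and> (u = x \<or> adjG V r par c1 k u x)
       \<and> adjG V r par c1 k x y \<and> x \<in> V \<and> y \<in> V \<and> betw par u x y \<and> betw par u y v \<and> y \<noteq> u"
      then obtain x y where h: "rstep V r par c1 k u v = [x, y]" "u = x \<or> adjG V r par c1 k u x"
        "adjG V r par c1 k x y" "x \<in> V" "y \<in> V" "betw par u x y" "betw par u y v" "y \<noteq> u" by blast
      have "card (dset par y v) < card (dset par u v)"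
        using card_dec[OF h(7) less.prems h(5) vV] h(8) by simp
      then obtain n where n: "last (walk V r par c1 k n y v) = v"
        "okw (adjG V r par c1 k) (walk V r par c1 k n y v)"
        "walk_weight par w (walk V r par c1 k n y v) = delta par w y v"
        using less.hyps[OF _ h(5)] by blast
      obtain ys where ys: "walk V r par c1 k n y v = y # ys" using walk_hd[of V r par c1 k n y v] by blast
      have wk: "walk V r par c1 k (Suc n) u v = u # x # y # ys" using h(1) uv ys by simp
      have "last (u # x # y # ys) = v" using n(1) ys by simp
      moreover have "okw (adjG V r par c1 k) (u # x # y # ys)"
        using okw_cons[OF okw_cons[OF n(2)[unfolded ys] ] ] h(2,3) by blast
      moreover have "walk_weight par w (u # x # y # ys) = delta par w u v"
      proof -
        have "walk_weight par w (u # x # y # ys) = delta par w u x + delta par w x y + delta par w y v"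
          using n(3) ys by (simp add: ww_cons)
        also have "\<dots> = delta par w u y + delta par w y v"
          using delta_split[OF h(6) less.prems h(5) h(4)] by simp
        also have "\<dots> = delta par w u v"
          using delta_split[OF h(7) less.prems vV h(5)] by simp
        finally show ?thesis .
      qed
      ultimately have "last (walk V r par c1 k (Suc n) u v) = v
     \<and> okw (adjG V r par c1 k) (walk V r par c1 k (Suc n) u v)
     \<and> walk_weight par w (walk V r par c1 k (Suc n) u v) = delta par w u v" unfolding wk by blast
      then show ?thesis by blast
    qed
  qed
qed


end


theorem theorem2:
  fixes V :: "'a set" and r :: 'a and par :: "'a \<Rightarrow> 'a" and c1 :: "'a \<Rightarrow> 'a"
    and w :: "'a \<Rightarrow> real" and k :: nat and u v :: 'a
  assumes tree: "rooted_tree V r par"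
    and pos: "\<forall>x \<in> V - {r}. w x > 0"
    and heavy: "\<forall>x \<in> V. (\<exists>c. isChild V r par c x) \<longrightarrow>
                   isChild V r par (c1 x) x \<and>
                   (\<forall>c. isChild V r par c x \<longrightarrow> card (sub par V c) \<le> card (sub par V (c1 x)))"
    and k4: "k \<ge> 4"
    and uV: "u \<in> V" and vV: "v \<in> V"
  shows "\<exists>n. last (walk V r par c1 k n u v) = v
           \<and> (\<forall>i. Suc i < length (walk V r par c1 k n u v) \<longrightarrow>
                 walk V r par c1 k n u v ! i = walk V r par c1 k n u v ! Suc i
                 \<or> adjG V r par c1 k (walk V r par c1 k n u v ! i) (walk V r par c1 k n u v ! Suc i))
           \<and> walk_weight par w (walk V r par c1 k n u v) = delta par w u v"
proof -
  interpret rtree V r par by (rule rtree.intro) (rule tree)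
  have "\<exists>n. last (walk V r par c1 k n u v) = v
     \<and> okw (adjG V r par c1 k) (walk V r par c1 k n u v)
     \<and> walk_weight par w (walk V r par c1 k n u v) = delta par w u v"
    by (rule main[OF key vV uV])
  then show ?thesis unfolding okw_def .
qed

end
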